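(* Let $(A_n)_{n\ge1}$ be a sequence of matrices with strictly positive entries, possibly of varying dimensions, such that all products $P_n:=A_nA_{n-1}\cdots A_1$ are defined. Let $\alpha\ge1$ and assume $R(A_n)\le\alpha$ for all $n\ge1$. Set $\kappa:=\frac{\sqrt{\alpha}-1}{\sqrt{\alpha}+1}$. Then for every $n\ge1$, \[ R(P_n)\le 1+\frac{4\kappa^n}{(1-\kappa^n)^2}, \] and in particular $R(P_n)\to1$ at least exponentially fast as $n\to\infty$.
   Context: For a matrix $B=(b_{ik})$ of size $d_1\times d_2$ with strictly positive entries, its distortion is $R(B)=\max_{1\le i,j\le d_1,\ 1\le k,\ell\le d_2}\frac{b_{ik}b_{j\ell}}{b_{i\ell}b_{jk}}$. *)

theory Defs
  imports Complex_Main "Jordan_Normal_Form.Matrix"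
begin

text \<open>A matrix with strictly positive entries (nonemptiness is assumed separately).\<close>
definition pos_mat :: "real mat \<Rightarrow> bool" where
  "pos_mat B \<longleftrightarrow> (\<forall>i<dim_row B. \<forall>k<dim_col B. B $$ (i,k) > 0)"

definition distortion :: "real mat \<Rightarrow> real" where
  "distortion B = Max {B $$ (i,k) * B $$ (j,l) / (B $$ (i,l) * B $$ (j,k)) | i j k l.
       i < dim_row B \<and> j < dim_row B \<and> k < dim_col B \<and> l < dim_col B}"

fun prod_seq :: "(nat \<Rightarrow> real mat) \<Rightarrow> nat \<Rightarrow> real mat" where
  "prod_seq A 0 = 1\<^sub>m (dim_col (A 1))"
| "prod_seq A (Suc n) = A (Suc n) * prod_seq A n"

end

theory Submission imports Defs begin

lemma quad_id:
  fixes x \<sigma> \<tau> :: real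
  shows "(1 + x*(\<sigma>\<^sup>2-1))*(1 + x*(\<tau>\<^sup>2-1)) - (\<sigma>+\<tau>)\<^sup>2 * (x*(1-x)) = (1 - x*(1+\<sigma>*\<tau>))\<^sup>2"
  by (simp add: power2_eq_square algebra_simps)

lemma alg_half:
  fixes \<sigma> \<tau> a b :: real
  assumes "0 \<le> a" "a \<le> b" "b \<le> 1" "\<sigma> \<ge> 1" "\<tau> \<ge> 1"
  shows "(\<sigma>+\<tau>)\<^sup>2 * (a*(1-b)) \<le> (1 + a*(\<sigma>\<^sup>2-1))*(1 + b*(\<tau>\<^sup>2-1))"
proof -
  have t: "\<tau>\<^sup>2 - 1 \<ge> 0" using assms by (simp add: one_le_power)
  have s: "\<sigma>\<^sup>2 - 1 \<ge> 0" using assms by (simp add: one_le_power)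
  have "(\<sigma>+\<tau>)\<^sup>2 * (a*(1-b)) \<le> (\<sigma>+\<tau>)\<^sup>2 * (a*(1-a))"
    using assms by (intro mult_left_mono mult_left_mono) auto
  also have "\<dots> \<le> (1 + a*(\<sigma>\<^sup>2-1))*(1 + a*(\<tau>\<^sup>2-1))"
    using quad_id[of a \<sigma> \<tau>] by (smt (verit) zero_le_power2)
  also have "\<dots> \<le> (1 + a*(\<sigma>\<^sup>2-1))*(1 + b*(\<tau>\<^sup>2-1))"
    using assms s t by (intro mult_left_mono) (auto intro!: mult_right_mono)
  finally show ?thesis .
qed

lemma alg:
  fixes \<sigma> \<tau> U V W :: real
  assumes "\<sigma> \<ge> 1" "\<tau> \<ge> 1" "1 \<le> U" "U \<le> \<sigma>\<^sup>2" "1 \<le> V" "V \<le> \<tau>\<^sup>2"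
    "W \<le> \<tau>\<^sup>2*U + V - \<tau>\<^sup>2" "W \<le> U + \<sigma>\<^sup>2*V - \<sigma>\<^sup>2"
  shows "W \<le> ((\<sigma>*\<tau>+1)/(\<sigma>+\<tau>))\<^sup>2 * (U*V)"
proof -
  define D where "D = (\<sigma>+\<tau>)\<^sup>2"
  have D: "D > 0" using assms by (simp add: D_def)
  have KD: "(\<sigma>*\<tau>+1)\<^sup>2 = D + (\<sigma>\<^sup>2-1)*(\<tau>\<^sup>2-1)"
    by (simp add: D_def power2_eq_square algebra_simps)
  have UV: "U*V > 0" using assms by simp
  have main: "D*(W - U*V) \<le> (\<sigma>\<^sup>2-1)*(\<tau>\<^sup>2-1)*(U*V)"
  proof (cases "\<sigma>\<^sup>2 = 1 \<or> \<tau>\<^sup>2 = 1")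
    case True
    then have "W \<le> U*V" using assms by auto
    then have "D*(W-U*V) \<le> 0" using D by (simp add: mult_nonneg_nonpos)
    also have "0 \<le> (\<sigma>\<^sup>2-1)*(\<tau>\<^sup>2-1)*(U*V)" using assms UV
      by (intro mult_nonneg_nonneg) (auto simp: one_le_power)
    finally show ?thesis .
  next
    case False
    then have s1: "\<sigma>\<^sup>2 - 1 > 0" and t1: "\<tau>\<^sup>2 - 1 > 0" using assms
      by (smt (verit) one_le_power)+
    define a where "a = (U-1)/(\<sigma>\<^sup>2-1)"
    define b where "b = (V-1)/(\<tau>\<^sup>2-1)"
    have Ua: "U = 1 + a*(\<sigma>\<^sup>2-1)" using s1 by (simp add: a_def)
    have Vb: "V = 1 + b*(\<tau>\<^sup>2-1)" using t1 by (simp add: b_def)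
    have a01: "0 \<le> a" "a \<le> 1" using assms s1 by (auto simp: a_def field_simps)
    have b01: "0 \<le> b" "b \<le> 1" using assms t1 by (auto simp: b_def field_simps)
    show ?thesis
    proof (cases "a \<le> b")
      case True
      have "W - U*V \<le> (U-1)*(\<tau>\<^sup>2-V)" using assms by (simp add: algebra_simps)
      also have "\<dots> = (\<sigma>\<^sup>2-1)*(\<tau>\<^sup>2-1)*(a*(1-b))" by (simp add: Ua Vb algebra_simps)
      finally have "D*(W-U*V) \<le> (\<sigma>\<^sup>2-1)*(\<tau>\<^sup>2-1)*(D*(a*(1-b)))"
        using D by (simp add: mult_left_mono mult.commute mult.left_commute)
      also have "\<dots> \<le> (\<sigma>\<^sup>2-1)*(\<tau>\<^sup>2-1)*(U*V)"
        using alg_half[of a b \<sigma> \<tau>] True a01 b01 assms s1 t1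
        by (intro mult_left_mono) (auto simp: D_def Ua Vb)
      finally show ?thesis .
    next
      case False
      have "W - U*V \<le> (\<sigma>\<^sup>2-U)*(V-1)" using assms by (simp add: algebra_simps)
      also have "\<dots> = (\<sigma>\<^sup>2-1)*(\<tau>\<^sup>2-1)*(b*(1-a))" by (simp add: Ua Vb algebra_simps)
      finally have "D*(W-U*V) \<le> (\<sigma>\<^sup>2-1)*(\<tau>\<^sup>2-1)*(D*(b*(1-a)))"
        using D by (simp add: mult_left_mono mult.commute mult.left_commute)
      also have "\<dots> \<le> (\<sigma>\<^sup>2-1)*(\<tau>\<^sup>2-1)*(U*V)"
        using alg_half[of b a \<tau> \<sigma>] False a01 b01 assms s1 t1
        by (intro mult_left_mono) (auto simp: D_def Ua Vb add.commute mult.commute)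
      finally show ?thesis .
    qed
  qed
  have "D*W \<le> (D + (\<sigma>\<^sup>2-1)*(\<tau>\<^sup>2-1)) * (U*V)" using main by (simp add: algebra_simps)
  then have "D*W \<le> (\<sigma>*\<tau>+1)\<^sup>2 * (U*V)" using KD by simp
  then show ?thesis using D by (simp add: D_def power_divide field_simps)
qed

lemma key_sum:
  fixes w u v :: "nat \<Rightarrow> real" and I :: "nat set" and \<sigma> \<tau> :: real
  assumes fin: "finite I" and ne: "I \<noteq> {}"
    and pos: "\<And>m. m \<in> I \<Longrightarrow> w m > 0 \<and> u m > 0 \<and> v m > 0"
    and ur: "\<And>m m'. m \<in> I \<Longrightarrow> m' \<in> I \<Longrightarrow> u m \<le> \<sigma>\<^sup>2 * u m'"
    and vr: "\<And>m m'. m \<in> I \<Longrightarrow> m' \<in> I \<Longrightarrow> v m \<le> \<tau>\<^sup>2 * v m'"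
    and st: "\<sigma> \<ge> 1" "\<tau> \<ge> 1"
  shows "(\<Sum>m\<in>I. w m) * (\<Sum>m\<in>I. w m * u m * v m)
     \<le> ((\<sigma>*\<tau>+1)/(\<sigma>+\<tau>))\<^sup>2 * ((\<Sum>m\<in>I. w m * u m) * (\<Sum>m\<in>I. w m * v m))"
proof -
  define p where "p = Min (u ` I)"
  define q where "q = Min (v ` I)"
  have "p \<in> u ` I" unfolding p_def using fin ne by (intro Min_in) auto
  then obtain m0 where m0: "m0 \<in> I" "p = u m0" by auto
  have "q \<in> v ` I" unfolding q_def using fin ne by (intro Min_in) auto
  then obtain m1 where m1: "m1 \<in> I" "q = v m1" by auto
  have p0: "p > 0" using m0 pos by auto
  have q0: "q > 0" using m1 pos by auto
  have pl: "p \<le> u m" "u m \<le> \<sigma>\<^sup>2 * p" if "m \<in> I" for m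
  proof -
    show "p \<le> u m" unfolding p_def using fin that by (intro Min_le) auto
    show "u m \<le> \<sigma>\<^sup>2 * p" using ur[of m m0] that m0 by simp
  qed
  have ql: "q \<le> v m" "v m \<le> \<tau>\<^sup>2 * q" if "m \<in> I" for m
  proof -
    show "q \<le> v m" unfolding q_def using fin that by (intro Min_le) auto
    show "v m \<le> \<tau>\<^sup>2 * q" using vr[of m m1] that m1 by simp
  qed
  define S0 where "S0 = (\<Sum>m\<in>I. w m)"
  define Su where "Su = (\<Sum>m\<in>I. w m * u m)"
  define Sv where "Sv = (\<Sum>m\<in>I. w m * v m)"
  define Suv where "Suv = (\<Sum>m\<in>I. w m * u m * v m)"
  have S0: "S0 > 0" unfolding S0_def using fin ne pos by (intro sum_pos) auto
  have pt1: "w m * u m * v m \<le> q*\<tau>\<^sup>2 * (w m * u m) + p * (w m * v m) - p*q*\<tau>\<^sup>2 * w m"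
    if "m \<in> I" for m
  proof -
    have "(u m - p) * (v m - q*\<tau>\<^sup>2) \<le> 0"
      using pl[OF that] ql[OF that] by (intro mult_nonneg_nonpos) (auto simp: mult.commute)
    then have "w m * ((u m - p) * (v m - q*\<tau>\<^sup>2)) \<le> 0"
      using pos[OF that] by (simp add: mult_nonneg_nonpos)
    then show ?thesis by (simp add: algebra_simps)
  qed
  have pt2: "w m * u m * v m \<le> q * (w m * u m) + p*\<sigma>\<^sup>2 * (w m * v m) - p*q*\<sigma>\<^sup>2 * w m"
    if "m \<in> I" for m
  proof -
    have "(u m - p*\<sigma>\<^sup>2) * (v m - q) \<le> 0"
      using pl[OF that] ql[OF that] by (intro mult_nonpos_nonneg) (auto simp: mult.commute)
    then have "w m * ((u m - p*\<sigma>\<^sup>2) * (v m - q)) \<le> 0"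
      using pos[OF that] by (simp add: mult_nonneg_nonpos)
    then show ?thesis by (simp add: algebra_simps)
  qed
  have W1: "Suv \<le> q*\<tau>\<^sup>2 * Su + p * Sv - p*q*\<tau>\<^sup>2 * S0"
    using sum_mono[OF pt1, of I] unfolding Suv_def Su_def Sv_def S0_def
    by (simp add: sum.distrib sum_subtractf sum_distrib_left)
  have W2: "Suv \<le> q * Su + p*\<sigma>\<^sup>2 * Sv - p*q*\<sigma>\<^sup>2 * S0"
    using sum_mono[OF pt2, of I] unfolding Suv_def Su_def Sv_def S0_def
    by (simp add: sum.distrib sum_subtractf sum_distrib_left)
  have U1: "p * S0 \<le> Su" unfolding S0_def Su_def sum_distrib_left
    using pl pos by (intro sum_mono) (simp add: mult.commute)
  have U2: "Su \<le> \<sigma>\<^sup>2 * p * S0" unfolding S0_def Su_def sum_distrib_left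
    using pl pos by (intro sum_mono) (simp add: mult.commute mult.left_commute)
  have V1: "q * S0 \<le> Sv" unfolding S0_def Sv_def sum_distrib_left
    using ql pos by (intro sum_mono) (simp add: mult.commute)
  have V2: "Sv \<le> \<tau>\<^sup>2 * q * S0" unfolding S0_def Sv_def sum_distrib_left
    using ql pos by (intro sum_mono) (simp add: mult.commute mult.left_commute)
  define U where "U = Su / (p*S0)"
  define V where "V = Sv / (q*S0)"
  define W where "W = Suv / (p*q*S0)"
  have pS: "p*S0 > 0" "q*S0 > 0" "p*q*S0 > 0" using p0 q0 S0 by auto
  have "W \<le> ((\<sigma>*\<tau>+1)/(\<sigma>+\<tau>))\<^sup>2 * (U*V)"
  proof (rule alg[OF st])
    show "1 \<le> U" using U1 pS by (simp add: U_def field_simps)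
    show "U \<le> \<sigma>\<^sup>2" using U2 pS by (simp add: U_def field_simps)
    show "1 \<le> V" using V1 pS by (simp add: V_def field_simps)
    show "V \<le> \<tau>\<^sup>2" using V2 pS by (simp add: V_def field_simps)
    show "W \<le> \<tau>\<^sup>2*U + V - \<tau>\<^sup>2" using W1 pS p0 q0 S0
      by (simp add: U_def V_def W_def field_simps)
    show "W \<le> U + \<sigma>\<^sup>2*V - \<sigma>\<^sup>2" using W2 pS p0 q0 S0
      by (simp add: U_def V_def W_def field_simps)
  qed
  then have "Suv / (p*q*S0) \<le> ((\<sigma>*\<tau>+1)/(\<sigma>+\<tau>))\<^sup>2 * (Su*Sv / (p*q*S0*S0))"
    by (simp add: U_def V_def W_def field_simps)
  then have "Suv \<le> ((\<sigma>*\<tau>+1)/(\<sigma>+\<tau>))\<^sup>2 * (Su*Sv / S0)"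
    using pS S0 p0 q0 by (simp add: field_simps)
  then have "S0 * Suv \<le> ((\<sigma>*\<tau>+1)/(\<sigma>+\<tau>))\<^sup>2 * (Su*Sv)"
    using S0 st by (simp add: field_simps)
  then show ?thesis by (simp add: S0_def Su_def Sv_def Suv_def)
qed

lemma distortion_set_eq:
  "{B $$ (i,k) * B $$ (j,l) / (B $$ (i,l) * B $$ (j,k)) | i j k l.
       i < dim_row B \<and> j < dim_row B \<and> k < dim_col B \<and> l < dim_col B}
   = (\<lambda>(i,j,k,l). B $$ (i,k) * B $$ (j,l) / (B $$ (i,l) * B $$ (j,k))) `
       ({..<dim_row B} \<times> {..<dim_row B} \<times> {..<dim_col B} \<times> {..<dim_col B})"
  by (auto simp: image_iff) (metis lessThan_iff)

lemma distortion_le: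
  assumes "dim_row B > 0" "dim_col B > 0"
    and "\<And>i j k l. i < dim_row B \<Longrightarrow> j < dim_row B \<Longrightarrow> k < dim_col B \<Longrightarrow> l < dim_col B
           \<Longrightarrow> B $$ (i,k) * B $$ (j,l) / (B $$ (i,l) * B $$ (j,k)) \<le> c"
  shows "distortion B \<le> c"
  unfolding distortion_def distortion_set_eq
  using assms by (intro Max.boundedI) auto

lemma distortion_ge:
  assumes "i < dim_row B" "j < dim_row B" "k < dim_col B" "l < dim_col B"
  shows "B $$ (i,k) * B $$ (j,l) / (B $$ (i,l) * B $$ (j,k)) \<le> distortion B"
  unfolding distortion_def distortion_set_eq
  using assms by (intro Max_ge) (auto intro!: image_eqI[where x="(i,j,k,l)"])

lemma distortion_ge1:
  assumes "dim_row B > 0" "dim_col B > 0" "pos_mat B"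
  shows "1 \<le> distortion B"
proof -
  have "B $$ (0,0) > 0" using assms by (auto simp: pos_mat_def)
  then show ?thesis using distortion_ge[of 0 B 0 0 0] assms by simp
qed

lemma mult_entry:
  assumes "i < dim_row X" "k < dim_col Y" "dim_col X = dim_row Y"
  shows "(X * Y) $$ (i,k) = (\<Sum>m\<in>{0..<dim_row Y}. X $$ (i,m) * Y $$ (m,k))"
  using assms by (simp add: scalar_prod_def)

lemma pos_mult:
  assumes "pos_mat X" "pos_mat Y" "dim_col X = dim_row Y" "dim_row Y > 0"
  shows "pos_mat (X * Y)"
  unfolding pos_mat_def
proof (intro allI impI)
  fix i k assume ik: "i < dim_row (X*Y)" "k < dim_col (X*Y)"
  then show "(X*Y) $$ (i,k) > 0" using assms
    by (subst mult_entry[OF _ _ assms(3)]) (auto simp: pos_mat_def intro!: sum_pos mult_pos_pos)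
qed

lemma key_mat:
  fixes X Y :: "real mat" and \<sigma> \<tau> :: real
  assumes dims: "dim_row X > 0" "dim_col X > 0" "dim_col Y > 0" "dim_col X = dim_row Y"
    and posX: "pos_mat X" and posY: "pos_mat Y"
    and dX: "distortion X \<le> \<sigma>\<^sup>2" and dY: "distortion Y \<le> \<tau>\<^sup>2"
    and st: "\<sigma> \<ge> 1" "\<tau> \<ge> 1"
  shows "distortion (X * Y) \<le> ((\<sigma>*\<tau>+1)/(\<sigma>+\<tau>))\<^sup>2"
proof (rule distortion_le)
  show "dim_row (X*Y) > 0" "dim_col (X*Y) > 0" using dims by auto
  fix i j k l
  assume ijkl: "i < dim_row (X*Y)" "j < dim_row (X*Y)" "k < dim_col (X*Y)" "l < dim_col (X*Y)"
  then have ij: "i < dim_row X" "j < dim_row X" and kl: "k < dim_col Y" "l < dim_col Y" by auto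
  define I where "I = {0..<dim_row Y}"
  define w where "w m = X $$ (j,m) * Y $$ (m,l)" for m
  define u where "u m = X $$ (i,m) / X $$ (j,m)" for m
  define v where "v m = Y $$ (m,k) / Y $$ (m,l)" for m
  have pX: "X $$ (a,m) > 0" if "a < dim_row X" "m \<in> I" for a m
    using posX that dims by (auto simp: pos_mat_def I_def)
  have pY: "Y $$ (m,a) > 0" if "a < dim_col Y" "m \<in> I" for a m
    using posY that by (auto simp: pos_mat_def I_def)
  have pos: "w m > 0 \<and> u m > 0 \<and> v m > 0" if "m \<in> I" for m
    using pX[OF ij(1) that] pX[OF ij(2) that] pY[OF kl(1) that] pY[OF kl(2) that]
    by (simp add: w_def u_def v_def)
  have e_ik: "(X*Y) $$ (i,k) = (\<Sum>m\<in>I. w m * u m * v m)"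
    unfolding mult_entry[OF ij(1) kl(1) dims(4)] I_def[symmetric]
  proof (rule sum.cong[OF refl])
    fix m assume m: "m \<in> I"
    show "X $$ (i,m) * Y $$ (m,k) = w m * u m * v m"
      using pX[OF ij(2) m] pY[OF kl(2) m] by (simp add: w_def u_def v_def)
  qed
  have e_jl: "(X*Y) $$ (j,l) = (\<Sum>m\<in>I. w m)"
    unfolding mult_entry[OF ij(2) kl(2) dims(4)] I_def[symmetric] w_def ..
  have e_il: "(X*Y) $$ (i,l) = (\<Sum>m\<in>I. w m * u m)"
    unfolding mult_entry[OF ij(1) kl(2) dims(4)] I_def[symmetric]
  proof (rule sum.cong[OF refl])
    fix m assume m: "m \<in> I"
    show "X $$ (i,m) * Y $$ (m,l) = w m * u m"
      using pX[OF ij(2) m] by (simp add: w_def u_def)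
  qed
  have e_jk: "(X*Y) $$ (j,k) = (\<Sum>m\<in>I. w m * v m)"
    unfolding mult_entry[OF ij(2) kl(1) dims(4)] I_def[symmetric]
  proof (rule sum.cong[OF refl])
    fix m assume m: "m \<in> I"
    show "X $$ (j,m) * Y $$ (m,k) = w m * v m"
      using pY[OF kl(2) m] by (simp add: w_def v_def)
  qed
  have fin: "finite I" and ne: "I \<noteq> {}" using dims by (auto simp: I_def)
  have ur: "u m \<le> \<sigma>\<^sup>2 * u m'" if "m \<in> I" "m' \<in> I" for m m'
  proof -
    have mm: "m < dim_col X" "m' < dim_col X" using that dims by (auto simp: I_def)
    define r where "r = X $$ (i,m) * X $$ (j,m') / (X $$ (i,m') * X $$ (j,m))"
    have "r \<le> \<sigma>\<^sup>2" using distortion_ge[OF ij mm] dX by (simp add: r_def)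
    moreover have "u m = r * u m'"
      using pX[OF ij(1) that(2)] pX[OF ij(2) that(2)] pX[OF ij(2) that(1)]
      by (simp add: u_def r_def field_simps)
    moreover have "u m' > 0" using pos that by auto
    ultimately show ?thesis by (simp add: mult_right_mono)
  qed
  have vr: "v m \<le> \<tau>\<^sup>2 * v m'" if "m \<in> I" "m' \<in> I" for m m'
  proof -
    have mm: "m < dim_row Y" "m' < dim_row Y" using that by (auto simp: I_def)
    define r where "r = Y $$ (m,k) * Y $$ (m',l) / (Y $$ (m,l) * Y $$ (m',k))"
    have "r \<le> \<tau>\<^sup>2" using distortion_ge[OF mm kl] dY by (simp add: r_def)
    moreover have "v m = r * v m'"
      using pY[OF kl(1) that(2)] pY[OF kl(2) that(2)] pY[OF kl(2) that(1)]
      by (simp add: v_def r_def field_simps)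
    moreover have "v m' > 0" using pos that by auto
    ultimately show ?thesis by (simp add: mult_right_mono)
  qed
  have S: "(\<Sum>m\<in>I. w m) * (\<Sum>m\<in>I. w m * u m * v m)
     \<le> ((\<sigma>*\<tau>+1)/(\<sigma>+\<tau>))\<^sup>2 * ((\<Sum>m\<in>I. w m * u m) * (\<Sum>m\<in>I. w m * v m))"
    by (rule key_sum[OF fin ne pos ur vr st])
  have p1: "(\<Sum>m\<in>I. w m * u m) > 0" "(\<Sum>m\<in>I. w m * v m) > 0"
    using fin ne pos by (auto intro!: sum_pos)
  show "(X*Y) $$ (i,k) * (X*Y) $$ (j,l) / ((X*Y) $$ (i,l) * (X*Y) $$ (j,k))
        \<le> ((\<sigma>*\<tau>+1)/(\<sigma>+\<tau>))\<^sup>2"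
    unfolding e_ik e_jl e_il e_jk using S p1
    by (simp add: pos_divide_le_eq mult.commute)
qed

lemma ratio_mult:
  fixes \<kappa> c :: real
  assumes "0 \<le> \<kappa>" "\<kappa> < 1" "0 \<le> c" "c < 1"
  shows "(((1+\<kappa>)/(1-\<kappa>))*((1+c)/(1-c))+1)/((1+\<kappa>)/(1-\<kappa>)+(1+c)/(1-c))
         = (1+\<kappa>*c)/(1-\<kappa>*c)"
proof -
  have "\<kappa>*c \<le> \<kappa>" using assms by (simp add: mult_left_le)
  then have "\<kappa>*c < 1" using assms by simp
  have d: "(1-\<kappa>)*(1-c) > 0" using assms by simp
  have a: "1-\<kappa> \<noteq> 0" "1-c \<noteq> 0" using assms by auto
  have n1: "((1+\<kappa>)/(1-\<kappa>))*((1+c)/(1-c))+1 = 2*(1+\<kappa>*c)/((1-\<kappa>)*(1-c))"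
    using a by (simp add: divide_simps del: eq_divide_eq) (simp add: algebra_simps)
  have n2: "(1+\<kappa>)/(1-\<kappa>)+(1+c)/(1-c) = 2*(1-\<kappa>*c)/((1-\<kappa>)*(1-c))"
    using a by (simp add: divide_simps del: eq_divide_eq) (simp add: algebra_simps)
  have hh: "(2*p/q)/(2*r/q) = p/r" if "q \<noteq> 0" for p q r :: real
    using that by (cases "r = 0") (auto simp: divide_simps)
  show ?thesis unfolding n1 n2 using a by (intro hh) simp
qed

theorem mainTheorem11:
  fixes A :: "nat \<Rightarrow> real mat" and \<alpha> \<kappa> :: real
  assumes nonempty: "\<And>n. n \<ge> 1 \<Longrightarrow> dim_row (A n) > 0 \<and> dim_col (A n) > 0"
    and pos: "\<And>n. n \<ge> 1 \<Longrightarrow> pos_mat (A n)"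
    and compat: "\<And>n. n \<ge> 1 \<Longrightarrow> dim_col (A (Suc n)) = dim_row (A n)"
    and alpha: "\<alpha> \<ge> 1"
    and bound: "\<And>n. n \<ge> 1 \<Longrightarrow> distortion (A n) \<le> \<alpha>"
    and kappa: "\<kappa> = (sqrt \<alpha> - 1) / (sqrt \<alpha> + 1)"
  shows "(\<forall>n\<ge>1. distortion (prod_seq A n) \<le> 1 + 4 * \<kappa> ^ n / (1 - \<kappa> ^ n)\<^sup>2)
         \<and> (\<lambda>n. distortion (prod_seq A n)) \<longlonglongrightarrow> 1"
proof -
  define a where "a = sqrt \<alpha>"
  have a1: "a \<ge> 1" using alpha by (simp add: a_def)
  have a2: "a\<^sup>2 = \<alpha>" using alpha by (simp add: a_def)
  have k0: "0 \<le> \<kappa>" and k1: "\<kappa> < 1" using a1 by (auto simp: kappa a_def[symmetric] field_simps)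
  have ak: "(1+\<kappa>)/(1-\<kappa>) = a" using a1 by (simp add: kappa a_def[symmetric] field_simps)
  define b where "b n = ((1+\<kappa>^n)/(1-\<kappa>^n))\<^sup>2" for n
  have kn: "0 \<le> \<kappa>^n" "\<kappa>^n < 1" if "n \<ge> 1" for n
    using k0 k1 that by (auto simp: power_less_one_iff)
  have claim: "dim_row (prod_seq A (Suc n)) = dim_row (A (Suc n)) \<and>
       dim_col (prod_seq A (Suc n)) = dim_col (A 1) \<and> pos_mat (prod_seq A (Suc n)) \<and>
       distortion (prod_seq A (Suc n)) \<le> b (Suc n)" for n
  proof (induction n)
    case 0
    have "prod_seq A (Suc 0) = A 1" by simp
    moreover have "b 1 = \<alpha>" using ak a2 by (simp add: b_def)
    ultimately show ?case using pos[of 1] bound[of 1] by simp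
  next
    case (Suc n)
    let ?P = "prod_seq A (Suc n)"
    have eq: "prod_seq A (Suc (Suc n)) = A (Suc (Suc n)) * ?P" by simp
    define c where "c = \<kappa>^Suc n"
    have c: "0 \<le> c" "c < 1" using kn[of "Suc n"] by (auto simp: c_def)
    define \<tau> where "\<tau> = (1+c)/(1-c)"
    have \<tau>1: "\<tau> \<ge> 1" using c by (simp add: \<tau>_def field_simps)
    have dP: "distortion ?P \<le> \<tau>\<^sup>2" using Suc by (simp add: b_def \<tau>_def c_def)
    have cp: "dim_col (A (Suc (Suc n))) = dim_row ?P" using Suc compat[of "Suc n"] by simp
    have ne1: "dim_row (A (Suc (Suc n))) > 0" "dim_col (A (Suc (Suc n))) > 0"
      using nonempty[of "Suc (Suc n)"] by auto
    have ne2: "dim_col ?P > 0" "dim_row ?P > 0" using Suc nonempty[of 1] nonempty[of "Suc n"] by auto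
    have "distortion (A (Suc (Suc n)) * ?P) \<le> ((a*\<tau>+1)/(a+\<tau>))\<^sup>2"
      using key_mat[OF ne1 ne2(1) cp pos[of "Suc (Suc n)"] _ _ _ a1 \<tau>1] Suc
        bound[of "Suc (Suc n)"] a2 dP by simp
    also have "(a*\<tau>+1)/(a+\<tau>) = (1+\<kappa>*c)/(1-\<kappa>*c)"
      using ratio_mult[OF k0 k1 c] by (simp add: ak \<tau>_def)
    also have "((1+\<kappa>*c)/(1-\<kappa>*c))\<^sup>2 = b (Suc (Suc n))" by (simp add: b_def c_def)
    finally have d: "distortion (A (Suc (Suc n)) * ?P) \<le> b (Suc (Suc n))" .
    have "pos_mat (A (Suc (Suc n)) * ?P)"
      using pos_mult[OF pos[of "Suc (Suc n)"] _ cp ne2(2)] Suc by simp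
    then show ?case using d eq Suc by simp
  qed
  have bnd: "distortion (prod_seq A n) \<le> b n" if "n \<ge> 1" for n
    using claim[of "n-1"] that by simp
  have ge1: "1 \<le> distortion (prod_seq A n)" if "n \<ge> 1" for n
    using claim[of "n-1"] that nonempty[of n] nonempty[of 1]
    by (intro distortion_ge1) auto
  have beq: "b n = 1 + 4 * \<kappa> ^ n / (1 - \<kappa> ^ n)\<^sup>2" if "n \<ge> 1" for n
  proof -
    have "1 - \<kappa>^n \<noteq> 0" using kn[OF that] by simp
    then show ?thesis by (simp add: b_def power_divide field_simps) (simp add: power2_eq_square algebra_simps)
  qed
  have lim: "b \<longlonglongrightarrow> ((1+0)/(1-0))\<^sup>2" unfolding b_def
    using k0 k1 by (intro tendsto_intros) auto
  have "(\<lambda>n. distortion (prod_seq A n)) \<longlonglongrightarrow> 1"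
  proof (rule tendsto_sandwich[of "\<lambda>_. 1" _ _ b])
    show "\<forall>\<^sub>F n in sequentially. 1 \<le> distortion (prod_seq A n)"
      using ge1 by (auto simp: eventually_sequentially)
    show "\<forall>\<^sub>F n in sequentially. distortion (prod_seq A n) \<le> b n"
      using bnd by (auto simp: eventually_sequentially)
    show "(\<lambda>_. 1::real) \<longlonglongrightarrow> 1" by simp
    show "b \<longlonglongrightarrow> 1" using lim by simp
  qed
  then show ?thesis using bnd beq by simp
qed

end
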